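(* Let $(G,* )$ be a topological group with the Hurewicz property. Then $G$ has ${\sf S}_c(\mathcal{O}_{\sf nbd},\mathcal{O})$ if and only if $G$ has ${\sf S}_c(\mathcal{O},\mathcal{O})$.
   Context: For a topological group $(G,* )$ with identity $e$ and a neighborhood $U$ of $e$, let $\mathcal{O}(U)=\{x*U: x\in G\}$ and $\mathcal{O}_{\sf nbd}=\{\mathcal{O}(U): U \text{ a neighborhood of } e\}$. $\mathcal{O}$ denotes the collection of all open covers of $G$. A family $\mathcal{B}$ refines $\mathcal{A}$ if every member of $\mathcal{B}$ is contained in some member of $\mathcal{A}$. ${\sf S}_c(\mathcal{A},\mathcal{B})$: for each sequence $(A_n:n<\infty)$ of elements of $\mathcal{A}$ there is a sequence $(B_n:n<\infty)$ such that each $B_n$ is a pairwise disjoint family of open sets refining $A_n$ and $\bigcup_{n}B_n\in\mathcal{B}$. A space $X$ has the Hurewicz property if for each sequence $(\mathcal{U}_n:n<\infty)$ of open covers of $X$ there are finite $\mathcal{F}_n\subseteq\mathcal{U}_n$ such that for each $x\in X$ the set $\{n: x\notin\bigcup\mathcal{F}_n\}$ is finite. *)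

theory Defs
  imports "HOL-Analysis.Analysis"
begin

text \<open>Topological groups are modelled by the type class topological_group_add
(group operation written additively: x * U becomes (\<lambda>u. x + u) ` U, identity 0).\<close>

definition open_covers :: "'a::topological_space set set set" where
  "open_covers = {C. (\<forall>V\<in>C. open V) \<and> \<Union>C = UNIV}"

definition is_nbd_of :: "'a::topological_space set \<Rightarrow> 'a \<Rightarrow> bool" where
  "is_nbd_of U e \<longleftrightarrow> (\<exists>V. open V \<and> e \<in> V \<and> V \<subseteq> U)"

definition translates :: "'a::group_add set \<Rightarrow> 'a set set" where
  "translates U = {(\<lambda>u. x + u) ` U | x. True}"

definition nbd_covers :: "'a::topological_group_add set set set" where
  "nbd_covers = {translates U | U. is_nbd_of U 0}"

definition refines :: "'a set set \<Rightarrow> 'a set set \<Rightarrow> bool" where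
  "refines B A \<longleftrightarrow> (\<forall>V\<in>B. \<exists>W\<in>A. V \<subseteq> W)"

definition S_c :: "'a::topological_space set set set \<Rightarrow> 'a set set set \<Rightarrow> bool" where
  "S_c \<A> \<B> \<longleftrightarrow> (\<forall>A :: nat \<Rightarrow> 'a set set. (\<forall>n. A n \<in> \<A>) \<longrightarrow>
     (\<exists>B :: nat \<Rightarrow> 'a set set.
        (\<forall>n. (\<forall>V\<in>B n. open V) \<and> pairwise disjnt (B n) \<and> refines (B n) (A n))
        \<and> (\<Union>n. B n) \<in> \<B>))"

definition hurewicz :: "'a::topological_space itself \<Rightarrow> bool" where
  "hurewicz _ \<longleftrightarrow> (\<forall>U :: nat \<Rightarrow> 'a set set. (\<forall>n. U n \<in> open_covers) \<longrightarrow>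
     (\<exists>F :: nat \<Rightarrow> 'a set set. (\<forall>n. finite (F n) \<and> F n \<subseteq> U n) \<and>
        (\<forall>x. finite {n. x \<notin> \<Union>(F n)})))"

end

theory Submission imports Defs begin

lemma open_transl:
  fixes S :: "'a::topological_group_add set"
  assumes "open S" shows "open ((\<lambda>u. x + u) ` S)"
proof -
  have "(\<lambda>u. x + u) ` S = (\<lambda>u. -x + u) -` S"
  proof (intro set_eqI iffI)
    fix y assume "y \<in> (\<lambda>u. x + u) ` S" thus "y \<in> (\<lambda>u. -x + u) -` S"
      by (auto simp: add.assoc[symmetric])
  next
    fix y assume "y \<in> (\<lambda>u. -x + u) -` S"
    hence "x + (-x + y) \<in> (\<lambda>u. x + u) ` S" by blast
    thus "y \<in> (\<lambda>u. x + u) ` S" by (simp add: add.assoc[symmetric])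
  qed
  moreover have "continuous_on UNIV (\<lambda>u. -x + (u::'a))"
    by (intro continuous_intros)
  ultimately show ?thesis using assms
    by (metis open_vimage) 
qed

lemma nbd3:
  fixes x :: "'a::topological_group_add"
  assumes "open U" "x \<in> U"
  shows "\<exists>V. open V \<and> 0 \<in> V \<and> (\<forall>a\<in>V. \<forall>b\<in>V. \<forall>c\<in>V. x + a - b + c \<in> U)"
proof -
  define f where "f = (\<lambda>p::'a\<times>'a\<times>'a. x + fst p - fst (snd p) + snd (snd p))"
  have "continuous_on UNIV f" unfolding f_def by (intro continuous_intros)
  hence o: "open (f -` U)" using assms(1)
    by (metis open_vimage)
  have "(0,0,0) \<in> f -` U" using assms(2) by (simp add: f_def)
  then obtain A BC where A: "open A" "open BC" "(0,0,0) \<in> A \<times> BC" "A \<times> BC \<subseteq> f -` U"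
    using open_prod_elim[OF o] by metis
  then obtain B C where B: "open B" "open C" "(0,0) \<in> B \<times> C" "B \<times> C \<subseteq> BC"
    using open_prod_elim[OF A(2)] by (metis mem_Sigma_iff order_refl)
  show ?thesis
    apply (rule exI[of _ "A \<inter> B \<inter> C"])
  proof (intro conjI ballI)
    fix a b c assume "a \<in> A \<inter> B \<inter> C" "b \<in> A \<inter> B \<inter> C" "c \<in> A \<inter> B \<inter> C"
    hence "(a,(b,c)) \<in> A \<times> BC" using B(4) by auto
    thus "x + a - b + c \<in> U" using A(4) by (auto simp: f_def)
  qed (use A B in auto)
qed

lemma bwd:
  assumes "S_c (open_covers :: 'a::topological_group_add set set set) open_covers"
  shows "S_c (nbd_covers :: 'a set set set) open_covers"
  unfolding S_c_def
proof (intro allI impI)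
  fix A :: "nat \<Rightarrow> 'a set set"
  assume "\<forall>n. A n \<in> nbd_covers"
  hence "\<forall>n. \<exists>U. A n = translates U \<and> is_nbd_of U 0"
    unfolding nbd_covers_def by auto
  from this[THEN choice] obtain U where U: "\<And>n. A n = translates (U n)" "\<And>n. is_nbd_of (U n) 0"
    by blast
  define A' where "A' n = translates (interior (U n))" for n
  have "A' n \<in> open_covers" for n
  proof -
    have "0 \<in> interior (U n)" using U(2)[of n] unfolding is_nbd_of_def
      by (meson interior_maximal subsetD)
    hence "y \<in> \<Union>(A' n)" for y
      unfolding A'_def translates_def by (auto intro!: exI[of _ "(\<lambda>u. y + u) ` interior (U n)"] image_eqI[of _ _ 0])
    moreover have "\<forall>V\<in>A' n. open V" unfolding A'_def translates_def
      by (auto intro!: open_transl)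
    ultimately show ?thesis unfolding open_covers_def by auto
  qed
  then obtain B where B: "\<forall>n. (\<forall>V\<in>B n. open V) \<and> pairwise disjnt (B n) \<and> refines (B n) (A' n)"
    "(\<Union>n. B n) \<in> open_covers"
    using assms unfolding S_c_def by meson
  have "refines (B n) (A n)" for n
  proof -
    have "refines (A' n) (A n)" unfolding refines_def A'_def U(1) translates_def
      using interior_subset by blast
    thus ?thesis using B(1) unfolding refines_def by (meson order_trans)
  qed
  thus "\<exists>B. (\<forall>n. (\<forall>V\<in>B n. open V) \<and> pairwise disjnt (B n) \<and> refines (B n) (A n))
        \<and> (\<Union>n. B n) \<in> open_covers" using B by blast
qed

lemma fwd:
  assumes H: "hurewicz TYPE('a::topological_group_add)"
    and S: "S_c (nbd_covers :: 'a set set set) open_covers"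
  shows "S_c (open_covers :: 'a set set set) open_covers"
  unfolding S_c_def
proof (intro allI impI)
  fix A :: "nat \<Rightarrow> 'a set set"
  assume A: "\<forall>n. A n \<in> open_covers"
  define P where "P n x p \<longleftrightarrow> open (fst p) \<and> 0 \<in> fst p \<and> snd p \<in> A n \<and>
      (\<forall>a\<in>fst p. \<forall>b\<in>fst p. \<forall>c\<in>fst p. x + a - b + c \<in> snd p)" for n x and p :: "'a set \<times> 'a set"
  have ex: "\<exists>p. P n x p" for n x
  proof -
    from A have "x \<in> \<Union>(A n)" unfolding open_covers_def by auto
    then obtain W where W: "W \<in> A n" "x \<in> W" by auto
    hence "open W" using A unfolding open_covers_def by auto
    from nbd3[OF this W(2)] obtain V where "open V \<and> 0 \<in> V \<and> (\<forall>a\<in>V. \<forall>b\<in>V. \<forall>c\<in>V. x + a - b + c \<in> W)"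
      by blast
    hence "P n x (V, W)" using W(1) unfolding P_def by simp
    thus ?thesis by blast
  qed
  define pp where "pp n x = (SOME p. P n x p)" for n x
  have Ppp: "P n x (pp n x)" for n x unfolding pp_def by (rule someI_ex[OF ex])
  define V where "V n x = fst (pp n x)" for n x
  define Wm where "Wm n x = snd (pp n x)" for n x
  have VW: "\<And>n x. open (V n x)" "\<And>n x. 0 \<in> V n x" "\<And>n x. Wm n x \<in> A n"
    "\<And>n x a b c. a \<in> V n x \<Longrightarrow> b \<in> V n x \<Longrightarrow> c \<in> V n x \<Longrightarrow> x + a - b + c \<in> Wm n x"
    using Ppp unfolding P_def V_def Wm_def by blast+
  define cov where "cov n = (\<lambda>x. (\<lambda>u. x + u) ` V n x) ` UNIV" for n
  have covO: "cov n \<in> open_covers" for n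
  proof -
    have "y \<in> \<Union>(cov n)" for y
      unfolding cov_def using VW(2)[of n y] by (auto intro!: image_eqI[of _ _ 0])
    moreover have "\<forall>S\<in>cov n. open S" unfolding cov_def by (auto intro!: open_transl VW(1))
    ultimately show ?thesis unfolding open_covers_def by auto
  qed
  have "\<exists>F :: nat \<Rightarrow> 'a set set. (\<forall>n. finite (F n) \<and> F n \<subseteq> cov n) \<and>
        (\<forall>x. finite {n. x \<notin> \<Union>(F n)})"
    using H[unfolded hurewicz_def, rule_format, of cov] covO by blast
  then obtain F where F: "\<And>n. finite (F n)" "\<And>n. F n \<subseteq> cov n" "\<And>y. finite {n. y \<notin> \<Union>(F n)}"
    by blast
  have "\<exists>X. finite X \<and> F n = (\<lambda>x. (\<lambda>u. x + u) ` V n x) ` X" for n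
  proof -
    obtain C where "C \<subseteq> UNIV" "finite C" "F n = (\<lambda>x. (\<lambda>u. x + u) ` V n x) ` C"
      using finite_subset_image[OF F(1)[of n], of "\<lambda>x. (\<lambda>u. x + u) ` V n x" UNIV] F(2)[of n]
      unfolding cov_def by blast
    thus ?thesis by blast
  qed
  hence "\<forall>n. \<exists>X. finite X \<and> F n = (\<lambda>x. (\<lambda>u. x + u) ` V n x) ` X" by blast
  from this[THEN choice] obtain X where X0: "\<forall>n. finite (X n) \<and> F n = (\<lambda>x. (\<lambda>u. x + u) ` V n x) ` X n"
    by blast
  have X: "\<And>n. finite (X n)" "\<And>n. F n = (\<lambda>x. (\<lambda>u. x + u) ` V n x) ` X n"
    using X0 by auto
  define Wn where "Wn n = (\<Inter>x\<in>X n. V n x)" for n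
  have nb: "translates (Wn n) \<in> nbd_covers" for n
  proof -
    have "open (Wn n)" unfolding Wn_def using X(1) VW(1) by (auto intro!: open_INT)
    moreover have "0 \<in> Wn n" unfolding Wn_def using VW(2) by auto
    ultimately show ?thesis unfolding nbd_covers_def is_nbd_of_def by blast
  qed
  have "\<forall>m. \<exists>B :: nat \<Rightarrow> 'a set set.
        (\<forall>j. (\<forall>V\<in>B j. open V) \<and> pairwise disjnt (B j) \<and> refines (B j) (translates (Wn (prod_encode (m,j)))))
        \<and> (\<Union>j. B j) \<in> open_covers"
  proof
    fix m
    show "\<exists>B :: nat \<Rightarrow> 'a set set.
        (\<forall>j. (\<forall>V\<in>B j. open V) \<and> pairwise disjnt (B j) \<and> refines (B j) (translates (Wn (prod_encode (m,j)))))
        \<and> (\<Union>j. B j) \<in> open_covers"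
      using S[unfolded S_c_def, rule_format, of "\<lambda>j. translates (Wn (prod_encode (m,j)))"] nb
      by blast
  qed
  from this[THEN choice] obtain Bm where Bm0: "\<forall>m.
        (\<forall>j. (\<forall>V\<in>Bm m j. open V) \<and> pairwise disjnt (Bm m j) \<and> refines (Bm m j) (translates (Wn (prod_encode (m,j)))))
        \<and> (\<Union>j. Bm m j) \<in> open_covers"
    by blast
  have Bm: "\<And>m j. \<forall>V\<in>Bm m j. open V" "\<And>m j. pairwise disjnt (Bm m j)"
    "\<And>m j. refines (Bm m j) (translates (Wn (prod_encode (m,j))))"
    "\<And>m. (\<Union>j. Bm m j) \<in> open_covers"
    using Bm0 by blast+
  define B where "B n = Bm (fst (prod_decode n)) (snd (prod_decode n))" for n
  have Bref: "refines (B n) (translates (Wn n))" for n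
    using Bm(3)[of "fst (prod_decode n)" "snd (prod_decode n)"] unfolding B_def by simp
  define B' where "B' n = {S \<in> B n. S \<inter> \<Union>(F n) \<noteq> {}}" for n
  have "(\<forall>S\<in>B' n. open S) \<and> pairwise disjnt (B' n) \<and> refines (B' n) (A n)" for n
  proof (intro conjI)
    show "\<forall>S\<in>B' n. open S" using Bm(1) unfolding B'_def B_def by auto
    show "pairwise disjnt (B' n)" using Bm(2) unfolding B'_def B_def
      by (rule pairwise_subset) auto
    show "refines (B' n) (A n)" unfolding refines_def
    proof
      fix S assume "S \<in> B' n"
      hence S: "S \<in> B n" "S \<inter> \<Union>(F n) \<noteq> {}" unfolding B'_def by auto
      then obtain T where "T \<in> translates (Wn n)" "S \<subseteq> T" using Bref[of n] unfolding refines_def by blast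
      then obtain y where y: "S \<subseteq> (\<lambda>u. y + u) ` Wn n" unfolding translates_def by blast
      from S(2) obtain z where z: "z \<in> S" "z \<in> \<Union>(F n)" by blast
      then obtain x where x: "x \<in> X n" "z \<in> (\<lambda>u. x + u) ` V n x" using X(2)[of n] by auto
      then obtain v where v: "v \<in> V n x" "z = x + v" by auto
      from y z(1) obtain w where w: "w \<in> Wn n" "z = y + w" by auto
      have wV: "w \<in> V n x" using w(1) x(1) unfolding Wn_def by auto
      have yeq: "y = x + v - w" using v(2) w(2) by (metis add_diff_cancel)
      have "S \<subseteq> Wm n x"
      proof
        fix t assume "t \<in> S"
        with y obtain w' where w': "w' \<in> Wn n" "t = y + w'" by auto
        have "w' \<in> V n x" using w'(1) x(1) unfolding Wn_def by auto
        hence "x + v - w + w' \<in> Wm n x" using VW(4) v(1) wV by blast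
        thus "t \<in> Wm n x" using w'(2) yeq by simp
      qed
      thus "\<exists>W\<in>A n. S \<subseteq> W" using VW(3) by blast
    qed
  qed
  moreover have "(\<Union>n. B' n) \<in> open_covers"
  proof -
    have "\<forall>S\<in>(\<Union>n. B' n). open S" using Bm(1) unfolding B'_def B_def by auto
    moreover have "y \<in> \<Union>(\<Union>n. B' n)" for y
    proof -
      have "\<forall>m. \<exists>j. \<exists>S\<in>Bm m j. y \<in> S"
      proof
        fix m
        have "\<Union>(\<Union>j. Bm m j) = UNIV" using Bm(4)[of m] unfolding open_covers_def by blast
        hence "y \<in> \<Union>(\<Union>j. Bm m j)" by simp
        thus "\<exists>j. \<exists>S\<in>Bm m j. y \<in> S" by blast
      qed
      from this[THEN choice] obtain jj where jj0: "\<forall>m. \<exists>S\<in>Bm m (jj m). y \<in> S" ..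
      hence jj: "\<And>m. \<exists>S\<in>Bm m (jj m). y \<in> S" by (rule spec)
      define g where "g m = prod_encode (m, jj m)" for m
      have "inj g"
      proof (rule injI)
        fix a b assume "g a = g b"
        hence "(a, jj a) = (b, jj b)" unfolding g_def by (rule injD[OF inj_prod_encode])
        thus "a = b" by simp
      qed
      hence inf: "infinite (range g)" by (rule range_inj_infinite)
      have "\<not> range g \<subseteq> {n. y \<notin> \<Union>(F n)}"
      proof
        assume "range g \<subseteq> {n. y \<notin> \<Union>(F n)}"
        hence "finite (range g)" using F(3)[of y] by (rule finite_subset)
        thus False using inf by simp
      qed
      then obtain m where m: "y \<in> \<Union>(F (g m))" by auto
      obtain S where S: "S \<in> Bm m (jj m)" "y \<in> S" using jj by blast
      have "B (g m) = Bm m (jj m)" unfolding B_def g_def by simp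
      hence "S \<in> B' (g m)" using S m unfolding B'_def by auto
      hence "S \<in> (\<Union>n. B' n)" by (rule UN_I[OF UNIV_I])
      thus ?thesis using S(2) by (rule UnionI)
    qed
    hence "\<Union>(\<Union>n. B' n) = UNIV" by blast
    ultimately show ?thesis unfolding open_covers_def by (simp only: mem_Collect_eq)
  qed
  ultimately show "\<exists>B. (\<forall>n. (\<forall>V\<in>B n. open V) \<and> pairwise disjnt (B n) \<and> refines (B n) (A n))
        \<and> (\<Union>n. B n) \<in> open_covers" by (intro exI[of _ B'] conjI allI; blast)
qed

theorem theorem2p5:
  assumes "hurewicz TYPE('a::topological_group_add)"
  shows "S_c (nbd_covers :: 'a set set set) open_covers \<longleftrightarrow> S_c (open_covers :: 'a set set set) open_covers"
  using fwd[OF assms] bwd by blast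

end
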